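(* Let $n\ge1$, $0\le r\le n$ and $0\le k\le\binom{n-1}{r}$ be integers, let $X=[n]$, and let $\mathcal{A}\subseteq[n]^{(r)}$ be the initial segment of the colexicographic order of size $k$. For $1\le i\le n$ let $\mathcal{A}_{i,0}=\{B\in X_i^{(r-1)}: B\cup\{i\}\in\mathcal{A}\}$, $\mathcal{A}_{i,1}=\{B\in X_i^{(r)}: B\in\mathcal{A}\}$ and $A_i=X^{(\ge r+1)}\cup\mathcal{A}_{i,1}\cup\mathcal{A}_{i,0}\subseteq Q_n$. Then for distinct $i,j\in[n]$, $A_i$ and $A_j$ are isomorphic if and only if $\sigma(\mathcal{A})=\mathcal{A}$ for the transposition $\sigma=(ij)$.
   Context: $X_i=[n]\setminus\{i\}$; $Y^{(m)}$ denotes the $m$-subsets of $Y$ and $X^{(\ge m)}$ the subsets of size at least $m$. Colexicographic order: $A<_{colex}B$ iff $\max(A\Delta B)\in B$. For a permutation $\sigma$, $\sigma(\mathcal{A})=\{\{\sigma(b_1),\dots,\sigma(b_t)\}:\{b_1,\dots,b_t\}\in\mathcal{A}\}$. $Q_n$ is the hypercube on the power set of $[n]$ with metric $|x\Delta y|$; two subsets of $Q_n$ are isomorphic if related by an automorphism of $Q_n$ (a map $x\mapsto\tau(x)\Delta I$, $\tau$ a permutation of $[n]$, $I\subseteq[n]$). *)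

theory Defs
  imports "HOL-Combinatorics.Combinatorics"
begin

definition colex_less :: "nat set \<Rightarrow> nat set \<Rightarrow> bool" where
  "colex_less A B \<longleftrightarrow> A \<noteq> B \<and> Max ((A - B) \<union> (B - A)) \<in> B"

definition ksubsets :: "nat set \<Rightarrow> nat \<Rightarrow> nat set set" where
  "ksubsets Y m = {B. B \<subseteq> Y \<and> card B = m}"

definition ksubsets_ge :: "nat set \<Rightarrow> nat \<Rightarrow> nat set set" where
  "ksubsets_ge Y m = {B. B \<subseteq> Y \<and> m \<le> card B}"

definition colex_init :: "nat \<Rightarrow> nat \<Rightarrow> nat \<Rightarrow> nat set set" where
  "colex_init n r k = {S \<in> ksubsets {1..n} r.
      card {T \<in> ksubsets {1..n} r. colex_less T S} < k}"

text \<open>A_{i,0} = {B in X_i^(r-1) : B u {i} in A}  (empty when r = 0).\<close>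
definition A_i0 :: "nat \<Rightarrow> nat \<Rightarrow> nat set set \<Rightarrow> nat \<Rightarrow> nat set set" where
  "A_i0 n r \<A> i = {B. B \<subseteq> {1..n} - {i} \<and> card B + 1 = r \<and> insert i B \<in> \<A>}"

definition A_i1 :: "nat \<Rightarrow> nat \<Rightarrow> nat set set \<Rightarrow> nat \<Rightarrow> nat set set" where
  "A_i1 n r \<A> i = {B \<in> ksubsets ({1..n} - {i}) r. B \<in> \<A>}"

definition A_i :: "nat \<Rightarrow> nat \<Rightarrow> nat set set \<Rightarrow> nat \<Rightarrow> nat set set" where
  "A_i n r \<A> i = ksubsets_ge {1..n} (r + 1) \<union> A_i1 n r \<A> i \<union> A_i0 n r \<A> i"

definition cube_aut :: "(nat \<Rightarrow> nat) \<Rightarrow> nat set \<Rightarrow> nat set \<Rightarrow> nat set" where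
  "cube_aut \<tau> I x = ((\<tau> ` x) - I) \<union> (I - \<tau> ` x)"

definition cube_iso :: "nat \<Rightarrow> nat set set \<Rightarrow> nat set set \<Rightarrow> bool" where
  "cube_iso n A B \<longleftrightarrow> (\<exists>\<tau> I. \<tau> permutes {1..n} \<and> I \<subseteq> {1..n} \<and> cube_aut \<tau> I ` A = B)"

end

theory Submission
  imports Defs
begin

definition sg :: "nat \<Rightarrow> nat set \<Rightarrow> int" where
  "sg l x = (if l \<in> x then -1 else 1)"
definition FF :: "nat \<Rightarrow> nat set set \<Rightarrow> int" where
  "FF l S = (\<Sum>x\<in>S. sg l x)"
definition GG :: "nat \<Rightarrow> nat set set \<Rightarrow> int" where
  "GG n S = (\<Sum>l\<in>{1..n}. \<bar>FF l S\<bar>)"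

lemma GG_aut:
  assumes "\<tau> permutes {1..n}"
  shows "GG n (cube_aut \<tau> I ` S) = GG n S"
proof -
  have injt: "inj \<tau>" using permutes_inj[OF assms] .
  have inj: "inj (cube_aut \<tau> I)"
  proof (rule injI)
    fix x y assume "cube_aut \<tau> I x = cube_aut \<tau> I y"
    then have "\<tau> ` x = \<tau> ` y" unfolding cube_aut_def by blast
    then show "x = y" using injt by (simp add: inj_image_eq_iff)
  qed
  have key: "\<bar>FF (\<tau> l) (cube_aut \<tau> I ` S)\<bar> = \<bar>FF l S\<bar>" for l
  proof -
    have "FF (\<tau> l) (cube_aut \<tau> I ` S) = (\<Sum>x\<in>S. sg (\<tau> l) (cube_aut \<tau> I x))"
    proof -
      have "inj_on (cube_aut \<tau> I) S" using inj by (rule inj_on_subset) simp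
      then show ?thesis unfolding FF_def by (simp add: sum.reindex)
    qed
    also have "\<dots> = (\<Sum>x\<in>S. (if \<tau> l \<in> I then -1 else 1) * sg l x)"
    proof (rule sum.cong[OF refl])
      fix x
      have "\<tau> l \<in> \<tau> ` x \<longleftrightarrow> l \<in> x" using injt by (simp add: inj_image_mem_iff)
      then show "sg (\<tau> l) (cube_aut \<tau> I x) = (if \<tau> l \<in> I then -1 else 1) * sg l x"
        unfolding sg_def cube_aut_def by auto
    qed
    also have "\<dots> = (if \<tau> l \<in> I then -1 else 1) * FF l S"
      unfolding FF_def by (simp add: sum_distrib_left)
    finally show ?thesis by (simp add: abs_mult)
  qed
  have "GG n (cube_aut \<tau> I ` S) = (\<Sum>l\<in>{1..n}. \<bar>FF (\<tau> l) (cube_aut \<tau> I ` S)\<bar>)"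
    unfolding GG_def
    using sum.reindex_bij_betw[OF permutes_imp_bij[OF assms], of "\<lambda>l. \<bar>FF l (cube_aut \<tau> I ` S)\<bar>"]
    by simp
  also have "\<dots> = GG n S" unfolding GG_def using key by simp
  finally show ?thesis .
qed

lemma Max_sd_gt:
  assumes "finite A" "finite B" "x > Max ((A - B) \<union> (B - A))"
  shows "x \<in> A \<longleftrightarrow> x \<in> B"
proof (rule ccontr)
  assume "\<not> (x \<in> A \<longleftrightarrow> x \<in> B)"
  then have "x \<in> (A - B) \<union> (B - A)" by blast
  then have "x \<le> Max ((A - B) \<union> (B - A))" using assms(1,2) by (intro Max_ge) auto
  then show False using assms(3) by simp
qed

lemma colex_trans:
  assumes "finite A" "finite B" "finite C" "colex_less A B" "colex_less B C"
  shows "colex_less A C"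
proof -
  define m1 where "m1 = Max ((A - B) \<union> (B - A))"
  define m2 where "m2 = Max ((B - C) \<union> (C - B))"
  have ne1: "(A - B) \<union> (B - A) \<noteq> {}" using assms(4) unfolding colex_less_def by blast
  have ne2: "(B - C) \<union> (C - B) \<noteq> {}" using assms(5) unfolding colex_less_def by blast
  have m1in: "m1 \<in> (A - B) \<union> (B - A)" unfolding m1_def using ne1 assms by (intro Max_in) auto
  have m2in: "m2 \<in> (B - C) \<union> (C - B)" unfolding m2_def using ne2 assms by (intro Max_in) auto
  have m1B: "m1 \<in> B" using assms(4) unfolding colex_less_def m1_def by blast
  have m2C: "m2 \<in> C" using assms(5) unfolding colex_less_def m2_def by blast
  have m1A: "m1 \<notin> A" using m1in m1B by blast
  have m2B: "m2 \<notin> B" using m2in m2C by blast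
  have g1: "\<And>x. x > m1 \<Longrightarrow> x \<in> A \<longleftrightarrow> x \<in> B" unfolding m1_def using assms(1,2) Max_sd_gt by blast
  have g2: "\<And>x. x > m2 \<Longrightarrow> x \<in> B \<longleftrightarrow> x \<in> C" unfolding m2_def using assms(2,3) Max_sd_gt by blast
  have "m1 \<noteq> m2" using m1B m2B by blast
  define m where "m = max m1 m2"
  have mC: "m \<in> C" and mA: "m \<notin> A"
    using g1 g2 m1A m1B m2B m2C \<open>m1 \<noteq> m2\<close> unfolding m_def by (auto simp: max_def)
  have gt: "\<And>x. x > m \<Longrightarrow> x \<in> A \<longleftrightarrow> x \<in> C" using g1 g2 unfolding m_def by auto
  have "Max ((A - C) \<union> (C - A)) = m"
  proof (rule Max_eqI)
    show "finite ((A - C) \<union> (C - A))" using assms by auto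
    show "m \<in> (A - C) \<union> (C - A)" using mC mA by blast
    fix y assume "y \<in> (A - C) \<union> (C - A)"
    then show "y \<le> m" using gt by (meson DiffE UnE not_le)
  qed
  then show ?thesis unfolding colex_less_def using mC mA by auto
qed

lemma colex_irrefl: "\<not> colex_less A A"
  unfolding colex_less_def by simp

lemma colex_total:
  assumes "finite A" "finite B" "A \<noteq> B"
  shows "colex_less A B \<or> colex_less B A"
proof -
  have ne: "(A - B) \<union> (B - A) \<noteq> {}" using assms(3) by blast
  have "Max ((A - B) \<union> (B - A)) \<in> (A - B) \<union> (B - A)" using ne assms by (intro Max_in) auto
  moreover have "(B - A) \<union> (A - B) = (A - B) \<union> (B - A)" by blast
  ultimately show ?thesis unfolding colex_less_def using assms(3) by auto
qed

definition rk :: "nat \<Rightarrow> nat \<Rightarrow> nat set \<Rightarrow> nat" where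
  "rk n r S = card {T \<in> ksubsets {1..n} r. colex_less T S}"

lemma ksubsets_finite: "finite (ksubsets {1..n} r)"
  unfolding ksubsets_def by (rule finite_subset[of _ "Pow {1..n}"]) auto

lemma ksubsets_elem_finite: "S \<in> ksubsets {1..n} r \<Longrightarrow> finite S"
  unfolding ksubsets_def using finite_subset by auto

lemma rk_less:
  assumes "S \<in> ksubsets {1..n} r" "S' \<in> ksubsets {1..n} r" "colex_less S S'"
  shows "rk n r S < rk n r S'"
proof -
  have "{T \<in> ksubsets {1..n} r. colex_less T S} \<subset> {T \<in> ksubsets {1..n} r. colex_less T S'}"
  proof
    show "{T \<in> ksubsets {1..n} r. colex_less T S} \<subseteq> {T \<in> ksubsets {1..n} r. colex_less T S'}"
    proof
      fix T assume T: "T \<in> {T \<in> ksubsets {1..n} r. colex_less T S}"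
      then have "finite T" using ksubsets_elem_finite by blast
      moreover have "finite S" "finite S'" using assms(1,2) ksubsets_elem_finite by blast+
      ultimately have "colex_less T S'" using colex_trans[of T S S'] T assms(3) by blast
      then show "T \<in> {T \<in> ksubsets {1..n} r. colex_less T S'}" using T by blast
    qed
    show "{T \<in> ksubsets {1..n} r. colex_less T S} \<noteq> {T \<in> ksubsets {1..n} r. colex_less T S'}"
      using assms colex_irrefl by blast
  qed
  then show ?thesis unfolding rk_def
    by (intro psubset_card_mono) (auto intro: finite_subset[OF _ ksubsets_finite])
qed

lemma colex_init_eq: "colex_init n r k = {S \<in> ksubsets {1..n} r. rk n r S < k}"
  unfolding colex_init_def rk_def by simp

lemma card_colex_init: "card (colex_init n r k) \<le> k"
proof -
  have "inj_on (rk n r) (colex_init n r k)"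
  proof (rule inj_onI)
    fix S S' assume a: "S \<in> colex_init n r k" "S' \<in> colex_init n r k" "rk n r S = rk n r S'"
    then have k: "S \<in> ksubsets {1..n} r" "S' \<in> ksubsets {1..n} r" unfolding colex_init_eq by auto
    show "S = S'"
    proof (rule ccontr)
      assume "S \<noteq> S'"
      then have "colex_less S S' \<or> colex_less S' S"
        using colex_total[OF ksubsets_elem_finite[OF k(1)] ksubsets_elem_finite[OF k(2)]] by blast
      then show False using rk_less[OF k] rk_less[OF k(2,1)] a(3) by auto
    qed
  qed
  moreover have "rk n r ` colex_init n r k \<subseteq> {..<k}" unfolding colex_init_eq by auto
  ultimately show ?thesis using card_inj_on_le by (metis card_lessThan finite_lessThan)
qed

lemma colex_init_down:
  assumes "S \<in> colex_init n r k" "T \<in> ksubsets {1..n} r" "colex_less T S"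
  shows "T \<in> colex_init n r k"
  using assms rk_less[OF assms(2) _ assms(3)] unfolding colex_init_eq by auto


lemma sum_ind: "finite A \<Longrightarrow> (\<Sum>x\<in>A. if P x then 1 else 0 :: int) = int (card {x\<in>A. P x})"
  by (simp add: sum.If_cases Int_def conj_commute)

lemma FF_card: "finite S \<Longrightarrow> FF l S = int (card {x\<in>S. l \<notin> x}) - int (card {x\<in>S. l \<in> x})"
proof -
  assume f: "finite S"
  have "FF l S = (\<Sum>x\<in>S. (if l \<notin> x then 1 else 0) - (if l \<in> x then 1 else 0))"
    unfolding FF_def sg_def by (rule sum.cong) auto
  also have "\<dots> = int (card {x\<in>S. l \<notin> x}) - int (card {x\<in>S. l \<in> x})"
    using f by (simp add: sum_subtractf sum_ind)
  finally show ?thesis .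
qed

lemma upper_bound:
  assumes l: "l \<in> {1..n}"
  shows "FF l (ksubsets_ge {1..n} (r+1)) \<le> - int ((n - 1) choose r)"
proof -
  define U where "U = ksubsets_ge {1..n} (r+1)"
  define N where "N = {x\<in>U. l \<notin> x}"
  define P where "P = {x\<in>U. l \<in> x}"
  define K where "K = ksubsets ({1..n} - {l}) r"
  have fU: "finite U" unfolding U_def ksubsets_ge_def by (rule finite_subset[of _ "Pow {1..n}"]) auto
  have fP: "finite P" using fU unfolding P_def by auto
  have cK: "card K = (n - 1) choose r"
    unfolding K_def ksubsets_def using l by (simp add: n_subsets)
  have injN: "inj_on (insert l) N"
  proof (rule inj_onI)
    fix x y assume "x \<in> N" "y \<in> N" "insert l x = insert l y"
    moreover then have "l \<notin> x" "l \<notin> y" unfolding N_def by auto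
    ultimately show "x = y" by (metis insert_ident)
  qed
  have injK: "inj_on (insert l) K"
  proof (rule inj_onI)
    fix x y assume "x \<in> K" "y \<in> K" "insert l x = insert l y"
    moreover then have "l \<notin> x" "l \<notin> y" unfolding K_def ksubsets_def by auto
    ultimately show "x = y" by (metis insert_ident)
  qed
  have sub: "insert l ` N \<union> insert l ` K \<subseteq> P"
  proof -
    have "insert l ` N \<subseteq> P"
    proof
      fix y assume "y \<in> insert l ` N"
      then obtain x where x: "x \<in> N" "y = insert l x" by auto
      then have "x \<subseteq> {1..n}" "r + 1 \<le> card x" "l \<notin> x" unfolding N_def U_def ksubsets_ge_def by auto
      moreover have "finite x" using \<open>x \<subseteq> {1..n}\<close> finite_subset by blast
      ultimately show "y \<in> P" unfolding P_def U_def ksubsets_ge_def using x l by auto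
    qed
    moreover have "insert l ` K \<subseteq> P"
    proof
      fix y assume "y \<in> insert l ` K"
      then obtain x where x: "x \<in> K" "y = insert l x" by auto
      then have "x \<subseteq> {1..n} - {l}" "card x = r" unfolding K_def ksubsets_def by auto
      moreover have "finite x" using \<open>x \<subseteq> {1..n} - {l}\<close> finite_subset by blast
      moreover have "l \<notin> x" using \<open>x \<subseteq> {1..n} - {l}\<close> by blast
      ultimately show "y \<in> P" unfolding P_def U_def ksubsets_ge_def using x l
        by (auto simp: card_insert_disjoint)
    qed
    ultimately show ?thesis by blast
  qed
  have disj: "insert l ` N \<inter> insert l ` K = {}"
  proof (rule ccontr)
    assume "insert l ` N \<inter> insert l ` K \<noteq> {}"
    then obtain x y where xy: "x \<in> N" "y \<in> K" "insert l x = insert l y" by auto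
    have "finite x" "l \<notin> x" "r + 1 \<le> card x" using xy(1) unfolding N_def U_def ksubsets_ge_def
      using finite_subset by auto
    moreover have "finite y" "l \<notin> y" "card y = r" using xy(2) unfolding K_def ksubsets_def
      using finite_subset by auto
    ultimately show False using xy(3) by (metis card_insert_disjoint Suc_eq_plus1 not_less_eq_eq order_refl)
  qed
  have "card N + card K \<le> card P"
  proof -
    have fN: "finite N" using fU unfolding N_def by auto
    have fK: "finite K" using cK
      unfolding K_def ksubsets_def by (rule_tac finite_subset[of _ "Pow {1..n}"]) auto
    have "card (insert l ` N \<union> insert l ` K) = card N + card K"
      using card_Un_disjoint[OF _ _ disj] fN fK card_image[OF injN] card_image[OF injK] by simp
    then show ?thesis using card_mono[OF fP sub] by simp
  qed
  then show ?thesis using FF_card[OF fU, of l] cK unfolding N_def P_def U_def by simp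
qed

lemma Ai_decomp:
  assumes i: "i \<in> {1..n}" and A: "A \<subseteq> ksubsets {1..n} r"
  shows "A_i n r A i = ksubsets_ge {1..n} (r+1) \<union> (\<lambda>B. B - {i}) ` A"
proof -
  have "A_i1 n r A i \<union> A_i0 n r A i = (\<lambda>B. B - {i}) ` A"
  proof
    show "A_i1 n r A i \<union> A_i0 n r A i \<subseteq> (\<lambda>B. B - {i}) ` A"
    proof
      fix x assume "x \<in> A_i1 n r A i \<union> A_i0 n r A i"
      then show "x \<in> (\<lambda>B. B - {i}) ` A"
      proof
        assume "x \<in> A_i1 n r A i"
        then have "x \<in> A" "i \<notin> x" unfolding A_i1_def ksubsets_def by auto
        then show ?thesis by (intro image_eqI[of _ _ x]) auto
      next
        assume "x \<in> A_i0 n r A i"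
        then have "insert i x \<in> A" "i \<notin> x" unfolding A_i0_def by auto
        then show ?thesis by (intro image_eqI[of _ _ "insert i x"]) auto
      qed
    qed
    show "(\<lambda>B. B - {i}) ` A \<subseteq> A_i1 n r A i \<union> A_i0 n r A i"
    proof
      fix x assume "x \<in> (\<lambda>B. B - {i}) ` A"
      then obtain B where B: "B \<in> A" "x = B - {i}" by auto
      then have Bk: "B \<subseteq> {1..n}" "card B = r" using A unfolding ksubsets_def by auto
      have fB: "finite B" using Bk finite_subset by blast
      show "x \<in> A_i1 n r A i \<union> A_i0 n r A i"
      proof (cases "i \<in> B")
        case True
        then have "card x + 1 = r" using B Bk fB
          by (metis One_nat_def Suc_eq_plus1 card_Diff_singleton card.remove)
        moreover have "insert i x = B" using True B by auto
        ultimately have "x \<in> A_i0 n r A i" unfolding A_i0_def using B Bk by auto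
        then show ?thesis by blast
      next
        case False
        then have "x = B" using B by auto
        then have "x \<in> A_i1 n r A i" unfolding A_i1_def ksubsets_def using B Bk False by auto
        then show ?thesis by blast
      qed
    qed
  qed
  then show ?thesis unfolding A_i_def by blast
qed

lemma inj_remove:
  assumes A: "A \<subseteq> ksubsets {1..n} r"
  shows "inj_on (\<lambda>B. B - {i}) A"
proof (rule inj_onI)
  fix B B' assume a: "B \<in> A" "B' \<in> A" "B - {i} = B' - {i}"
  then have bk: "B \<in> ksubsets {1..n} r" "B' \<in> ksubsets {1..n} r" using A by auto
  have c: "card B = r" "card B' = r" "finite B" "finite B'"
    using bk ksubsets_elem_finite[OF bk(1)] ksubsets_elem_finite[OF bk(2)]
    by (simp_all add: ksubsets_def)
  show "B = B'"
  proof (cases "i \<in> B \<longleftrightarrow> i \<in> B'")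
    case True then show ?thesis using a(3) by blast
  next
    case False
    then show ?thesis using a(3) c
      by (metis card_Diff1_less_iff insert_Diff_single insert_absorb less_irrefl_nat)
  qed
qed


lemma GG_Ai:
  assumes i: "i \<in> {1..n}" and A: "A \<subseteq> ksubsets {1..n} r" and c: "card A \<le> (n-1) choose r"
  shows "GG n (A_i n r A i) = - (\<Sum>l\<in>{1..n}. FF l (ksubsets_ge {1..n} (r+1))) - int (card A)
           - (\<Sum>l\<in>{1..n}. \<Sum>B\<in>A. sg l B) + (\<Sum>B\<in>A. sg i B)"
proof -
  define Up where "Up = ksubsets_ge {1..n} (r+1)"
  define T where "T l = (\<Sum>B\<in>A. sg l (B - {i}))" for l
  have fUp: "finite Up" unfolding Up_def ksubsets_ge_def by (rule finite_subset[of _ "Pow {1..n}"]) auto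
  have fA: "finite A" using A ksubsets_finite finite_subset by blast
  have disj: "Up \<inter> (\<lambda>B. B - {i}) ` A = {}"
  proof (rule ccontr)
    assume "Up \<inter> (\<lambda>B. B - {i}) ` A \<noteq> {}"
    then obtain B where B: "B \<in> A" "B - {i} \<in> Up" by auto
    then have bk: "B \<in> ksubsets {1..n} r" using A by auto
    have "card B = r" "finite B" using bk ksubsets_elem_finite[OF bk] by (simp_all add: ksubsets_def)
    moreover have "r + 1 \<le> card (B - {i})" using B unfolding Up_def ksubsets_ge_def by auto
    ultimately show False by (metis card_Diff1_le not_less_eq_eq Suc_eq_plus1 le_trans)
  qed
  have FFe: "FF l (A_i n r A i) = FF l Up + T l" for l
  proof -
    have "FF l (A_i n r A i) = FF l Up + FF l ((\<lambda>B. B - {i}) ` A)"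
      unfolding Ai_decomp[OF i A] Up_def[symmetric] FF_def
      using sum.union_disjoint[OF fUp _ disj] fA by simp
    also have "FF l ((\<lambda>B. B - {i}) ` A) = T l"
      unfolding FF_def T_def using sum.reindex[OF inj_remove[OF A]] by simp
    finally show ?thesis .
  qed
  have Tv: "T l = (if l = i then int (card A) else (\<Sum>B\<in>A. sg l B))" for l
    unfolding T_def sg_def by (cases "l = i") (auto intro!: sum.cong)
  have Tle: "T l \<le> int (card A)" for l
  proof -
    have "T l \<le> (\<Sum>B\<in>A. 1)" unfolding T_def by (rule sum_mono) (simp add: sg_def)
    then show ?thesis by simp
  qed
  have neg: "FF l Up + T l \<le> 0" if "l \<in> {1..n}" for l
    using upper_bound[OF that, of r] Tle[of l] c unfolding Up_def by linarith
  have "GG n (A_i n r A i) = (\<Sum>l\<in>{1..n}. - (FF l Up + T l))"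
    unfolding GG_def FFe using neg by (intro sum.cong) auto
  also have "\<dots> = - (\<Sum>l\<in>{1..n}. FF l Up) - (\<Sum>l\<in>{1..n}. T l)"
    by (simp add: sum_subtractf sum_negf)
  also have "(\<Sum>l\<in>{1..n}. T l) = T i + (\<Sum>l\<in>{1..n} - {i}. T l)"
    using sum.remove[OF _ i] by simp
  also have "(\<Sum>l\<in>{1..n} - {i}. T l) = (\<Sum>l\<in>{1..n} - {i}. \<Sum>B\<in>A. sg l B)"
    using Tv by (intro sum.cong) auto
  also have "\<dots> = (\<Sum>l\<in>{1..n}. \<Sum>B\<in>A. sg l B) - (\<Sum>B\<in>A. sg i B)"
    using sum.remove[OF _ i, of "\<lambda>l. \<Sum>B\<in>A. sg l B"] by simp
  finally show ?thesis using Tv[of i] unfolding Up_def by simp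
qed


lemma transpose_img_swap:
  assumes "j \<in> B" "i \<notin> B" "i \<noteq> j"
  shows "transpose i j ` B = insert i (B - {j})"
proof
  show "transpose i j ` B \<subseteq> insert i (B - {j})"
    using assms by (auto simp: transpose_def)
  show "insert i (B - {j}) \<subseteq> transpose i j ` B"
  proof
    fix x assume x: "x \<in> insert i (B - {j})"
    show "x \<in> transpose i j ` B"
    proof (cases "x = i")
      case True
      then have "x = transpose i j j" by simp
      then show ?thesis using assms(1) by blast
    next
      case False
      then have "x \<in> B" "x \<noteq> j" using x by auto
      then have "x = transpose i j x" using False by (simp add: transpose_def)
      then show ?thesis using \<open>x \<in> B\<close> by blast
    qed
  qed
qed

lemma shift_lt:
  assumes ij: "i < j" and i: "i \<in> {1..n}" and j: "j \<in> {1..n}"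
    and eq: "(\<Sum>B\<in>colex_init n r k. sg i B) = (\<Sum>B\<in>colex_init n r k. sg j B)"
  shows "(image (transpose i j)) ` (colex_init n r k) = colex_init n r k"
proof -
  define A where "A = colex_init n r k"
  define \<sigma> where "\<sigma> = transpose i j"
  define Ai where "Ai = {B\<in>A. i \<in> B \<and> j \<notin> B}"
  define Aj where "Aj = {B\<in>A. j \<in> B \<and> i \<notin> B}"
  have AK: "A \<subseteq> ksubsets {1..n} r" unfolding A_def colex_init_def by auto
  have fA: "finite A" using AK ksubsets_finite finite_subset by blast
  have "(\<Sum>B\<in>A. sg i B) - (\<Sum>B\<in>A. sg j B)
        = (\<Sum>B\<in>A. 2 * (if j \<in> B \<and> i \<notin> B then 1 else 0) - 2 * (if i \<in> B \<and> j \<notin> B then 1 else 0))"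
    unfolding sum_subtractf[symmetric] by (rule sum.cong) (auto simp: sg_def)
  also have "\<dots> = 2 * int (card Aj) - 2 * int (card Ai)"
    unfolding sum_subtractf sum_distrib_left[symmetric] using fA
    by (simp add: sum_ind Ai_def Aj_def)
  finally have cardeq: "card Ai = card Aj" using eq unfolding A_def by simp
  have injs: "inj_on (image \<sigma>) X" for X
    unfolding \<sigma>_def by (meson inj_image_eq_iff inj_onI inj_transpose)
  have img: "image \<sigma> ` Aj \<subseteq> Ai"
  proof
    fix y assume "y \<in> image \<sigma> ` Aj"
    then obtain B where B: "B \<in> Aj" "y = \<sigma> ` B" by auto
    have BA: "B \<in> A" "j \<in> B" "i \<notin> B" using B unfolding Aj_def by auto
    have BK: "B \<subseteq> {1..n}" "card B = r" using BA AK unfolding ksubsets_def by auto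
    have fB: "finite B" using BK finite_subset by blast
    have y: "y = insert i (B - {j})" using B(2) transpose_img_swap[OF BA(2,3)] ij unfolding \<sigma>_def by simp
    have cB: "card B > 0" using fB BA(2) card_gt_0_iff by blast
    have cy: "card y = card B" using y fB BA cB ij by (simp add: card_insert_disjoint card_Diff_singleton)
    have "y \<subseteq> {1..n}" using y BK i by auto
    then have yK: "y \<in> ksubsets {1..n} r" unfolding ksubsets_def using cy BK by auto
    have "(y - B) \<union> (B - y) = {i, j}" using y BA ij by auto
    then have "colex_less y B" unfolding colex_less_def using BA ij y by auto
    then have "y \<in> A" using colex_init_down BA(1) yK unfolding A_def by blast
    then show "y \<in> Ai" unfolding Ai_def using y ij by auto
  qed
  have fAi: "finite Ai" using fA unfolding Ai_def by auto
  have imgeq: "image \<sigma> ` Aj = Ai"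
    using card_subset_eq[OF fAi img] card_image[OF injs[of Aj]] cardeq by simp
  have sub: "image \<sigma> ` A \<subseteq> A"
  proof
    fix y assume "y \<in> image \<sigma> ` A"
    then obtain B where B: "B \<in> A" "y = \<sigma> ` B" by auto
    show "y \<in> A"
    proof (cases "B \<in> Aj")
      case True then show ?thesis using imgeq B Ai_def by auto
    next
      case nj: False
      show ?thesis
      proof (cases "B \<in> Ai")
        case True
        then obtain B' where B': "B' \<in> Aj" "B = \<sigma> ` B'" using imgeq by auto
        have "\<sigma> ` \<sigma> ` B' = B'" unfolding \<sigma>_def by (simp add: image_comp)
        then show ?thesis using B B' Aj_def by auto
      next
        case False
        then have "(i \<in> B \<longleftrightarrow> j \<in> B)" using nj B(1) unfolding Ai_def Aj_def by auto
        then have "\<sigma> ` B = B" unfolding \<sigma>_def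
          by (metis transpose_image_eq transpose_commute image_empty)
        then show ?thesis using B by simp
      qed
    qed
  qed
  have "A \<subseteq> image \<sigma> ` A"
  proof
    fix B assume "B \<in> A"
    then have "\<sigma> ` B \<in> A" using sub by auto
    moreover have "\<sigma> ` \<sigma> ` B = B" unfolding \<sigma>_def by (simp add: image_comp)
    ultimately show "B \<in> image \<sigma> ` A" by (metis image_eqI)
  qed
  then show ?thesis using sub unfolding A_def \<sigma>_def by blast
qed

lemma easy_dir:
  assumes i: "i \<in> {1..n}" and j: "j \<in> {1..n}"
    and s: "(image (transpose i j)) ` A = A"
  shows "image (transpose i j) ` A_i n r A i \<subseteq> A_i n r A j"
proof
  define \<sigma> where "\<sigma> = transpose i j"
  have injs: "inj \<sigma>" unfolding \<sigma>_def by simp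
  fix y assume "y \<in> image \<sigma> ` A_i n r A i"
  then obtain x where x: "x \<in> A_i n r A i" "y = \<sigma> ` x" unfolding \<sigma>_def by auto
  have sub: "\<sigma> ` x \<subseteq> {1..n}" if "x \<subseteq> {1..n}"
    using that i j unfolding \<sigma>_def by (auto simp: transpose_def)
  have cd: "card (\<sigma> ` x) = card x" using injs by (simp add: card_image inj_on_subset)
  have jn: "j \<notin> \<sigma> ` x" if "i \<notin> x" using that unfolding \<sigma>_def
    by (auto simp: transpose_def split: if_splits)
  have inA: "\<sigma> ` B \<in> A" if "B \<in> A" for B using s that unfolding \<sigma>_def by blast
  from x(1) consider "x \<in> ksubsets_ge {1..n} (r+1)" | "x \<in> A_i1 n r A i" | "x \<in> A_i0 n r A i"
    unfolding A_i_def by blast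
  then show "y \<in> A_i n r A j"
  proof cases
    case 1
    then show ?thesis using sub cd x(2) unfolding A_i_def ksubsets_ge_def by auto
  next
    case 2
    then have "x \<subseteq> {1..n} - {i}" "card x = r" "x \<in> A" unfolding A_i1_def ksubsets_def by auto
    then have "y \<in> A_i1 n r A j" unfolding A_i1_def ksubsets_def
      using sub jn cd inA x(2) by auto
    then show ?thesis unfolding A_i_def by blast
  next
    case 3
    then have h: "x \<subseteq> {1..n} - {i}" "card x + 1 = r" "insert i x \<in> A" unfolding A_i0_def by auto
    have "\<sigma> ` insert i x = insert j (\<sigma> ` x)" unfolding \<sigma>_def by simp
    then have "insert j y \<in> A" using inA[OF h(3)] x(2) by simp
    then have "y \<in> A_i0 n r A j" unfolding A_i0_def
      using sub jn cd h x(2) by auto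
    then show ?thesis unfolding A_i_def by blast
  qed
qed

theorem lemma9:
  fixes n r k i j :: nat
  assumes "1 \<le> n" and "r \<le> n" and "k \<le> (n - 1) choose r"
    and "i \<in> {1..n}" and "j \<in> {1..n}" and "i \<noteq> j"
  shows "cube_iso n (A_i n r (colex_init n r k) i) (A_i n r (colex_init n r k) j)
     \<longleftrightarrow> (image (transpose i j)) ` (colex_init n r k) = colex_init n r k"
proof
  define A where "A = colex_init n r k"
  have AK: "A \<subseteq> ksubsets {1..n} r" unfolding A_def colex_init_def by auto
  have cA: "card A \<le> (n - 1) choose r" using card_colex_init[of n r k] assms(3) unfolding A_def by simp
  assume "cube_iso n (A_i n r (colex_init n r k) i) (A_i n r (colex_init n r k) j)"
  then obtain \<tau> I where t: "\<tau> permutes {1..n}"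
    "cube_aut \<tau> I ` A_i n r A i = A_i n r A j" unfolding cube_iso_def A_def by blast
  have "GG n (A_i n r A j) = GG n (A_i n r A i)" using GG_aut[OF t(1)] t(2) by metis
  then have eq: "(\<Sum>B\<in>A. sg i B) = (\<Sum>B\<in>A. sg j B)"
    using GG_Ai[OF assms(4) AK cA] GG_Ai[OF assms(5) AK cA] by simp
  show "(image (transpose i j)) ` (colex_init n r k) = colex_init n r k"
  proof (cases "i < j")
    case True
    then show ?thesis using shift_lt[OF True assms(4,5)] eq unfolding A_def by simp
  next
    case False
    then have "j < i" using assms(6) by simp
    then show ?thesis using shift_lt[OF \<open>j < i\<close> assms(5,4)] eq unfolding A_def
      by (simp add: transpose_commute)
  qed
next
  define A where "A = colex_init n r k"
  assume s: "(image (transpose i j)) ` (colex_init n r k) = colex_init n r k"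
  then have s1: "(image (transpose i j)) ` A = A" unfolding A_def .
  have s2: "(image (transpose j i)) ` A = A" using s1 by (simp add: transpose_commute)
  have c: "cube_aut (transpose i j) {} = image (transpose i j)"
    unfolding cube_aut_def by auto
  have "image (transpose i j) ` A_i n r A i = A_i n r A j"
  proof
    show "image (transpose i j) ` A_i n r A i \<subseteq> A_i n r A j"
      using easy_dir[OF assms(4,5) s1] .
    have h: "image (transpose j i) ` A_i n r A j \<subseteq> A_i n r A i"
      using easy_dir[OF assms(5,4) s2] .
    show "A_i n r A j \<subseteq> image (transpose i j) ` A_i n r A i"
    proof
      fix x assume "x \<in> A_i n r A j"
      then have "transpose i j ` x \<in> A_i n r A i" using h by (auto simp: transpose_commute)
      moreover have "transpose i j ` transpose i j ` x = x" by (simp add: image_comp)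
      ultimately show "x \<in> image (transpose i j) ` A_i n r A i" by (metis image_eqI)
    qed
  qed
  then show "cube_iso n (A_i n r (colex_init n r k) i) (A_i n r (colex_init n r k) j)"
    unfolding cube_iso_def A_def
    using permutes_swap_id[OF assms(4,5)] c by (metis empty_subsetI)
qed

end
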